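(* Let $d<0<r<u$ be real numbers with $(1+u)(1+d)=1$, let $S_0>0$, let $T\ge 1$ be an integer, and set $q=\frac{r-d}{u-d}\in(0,1)$. Let $\mathcal{S}=\{S_0(1+u)^k(1+d)^l : k,l\in\{0,1,2,\dots\}\}=\{S_0(1+u)^j: j\in\mathbb{Z}\}$ be the (extended, infinite) state space. Let $f:\mathcal{S}\to\mathbb{R}$ be the payoff of a European-style derivative with maturity $T$, and assume that either $\sum_{K\in\mathcal{S}}|f(K)|<\infty$ or $f\ge 0$. Define the discounted value process of the replication strategy by $$V_f(s,T)=f(s),\qquad V_f(s,t)=q\,V_f\big(s(1+u),t+1\big)+(1-q)\,V_f\big(s(1+d),t+1\big)\quad (s\in\mathcal{S},\ 0\le t<T),$$ equivalently $V_f(s,t)=\sum_{x=0}^{T-t}\binom{T-t}{x}q^x(1-q)^{T-t-x}f\big(s(1+u)^x(1+d)^{T-t-x}\big)$. Then for every $t\in\{0,1,\dots,T\}$, $$\sum_{s\in\mathcal{S}}V_f(s,t)=\sum_{K\in\mathcal{S}}f(K).$$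
   Context: This is the Cox–Ross–Rubinstein binomial model with constant one-period risk-free rate $r$ and up/down returns $u,d$, but with the state space extended to all points $S_0(1+u)^j$, $j\in\mathbb{Z}$, at every time. All values are expressed in numeraire (discounted) units: a payoff of one unit at time $T$ and the amount of wealth needed at time $t$ to replicate it are measured in the time-$T$ and time-$t$ numeraire respectively, so that one-period replication costs of a unit payoff contingent on an up-move (resp. down-move) are $q$ (resp. $1-q$). $V_f(s,t)$ is the (numeraire-denominated) wealth required at time $t$ in state $s$ to replicate the payoff $f(S_T)$ at time $T$; when $f\ge0$ the sums may be $+\infty$. *)

theory Defs
  imports "HOL-Analysis.Analysis" "HOL-Library.Extended_Nonnegative_Real"
begin

definition crr_states :: "real \<Rightarrow> real \<Rightarrow> real \<Rightarrow> real set" where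
  "crr_states S0 u d = {S0 * (1 + u) ^ k * (1 + d) ^ l | k l. True}"

text \<open>Backward recursion with n periods remaining to maturity.\<close>
fun repl_val :: "real \<Rightarrow> real \<Rightarrow> real \<Rightarrow> (real \<Rightarrow> real) \<Rightarrow> nat \<Rightarrow> real \<Rightarrow> real" where
  "repl_val q u d f 0 s = f s"
| "repl_val q u d f (Suc n) s =
     q * repl_val q u d f n (s * (1 + u)) + (1 - q) * repl_val q u d f n (s * (1 + d))"

definition V_f :: "real \<Rightarrow> real \<Rightarrow> real \<Rightarrow> (real \<Rightarrow> real) \<Rightarrow> nat \<Rightarrow> real \<Rightarrow> nat \<Rightarrow> real" where
  "V_f q u d f T s t = repl_val q u d f (T - t) s"

end

theory Submission
  imports Defs
begin

lemma shift_in: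
  assumes "x \<in> crr_states S0 u d"
  shows "x * (1 + u) \<in> crr_states S0 u d" "x * (1 + d) \<in> crr_states S0 u d"
proof -
  obtain k l where x: "x = S0 * (1 + u) ^ k * (1 + d) ^ l"
    using assms unfolding crr_states_def by blast
  have "x * (1 + u) = S0 * (1 + u) ^ Suc k * (1 + d) ^ l" using x by (simp add: algebra_simps)
  thus "x * (1 + u) \<in> crr_states S0 u d" unfolding crr_states_def by blast
  have "x * (1 + d) = S0 * (1 + u) ^ k * (1 + d) ^ Suc l" using x by (simp add: algebra_simps)
  thus "x * (1 + d) \<in> crr_states S0 u d" unfolding crr_states_def by blast
qed

lemma shift_bij:
  assumes "(1 + u) * (1 + d) = 1"
  shows "bij_betw (\<lambda>s. s * (1 + u)) (crr_states S0 u d) (crr_states S0 u d)"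
    "bij_betw (\<lambda>s. s * (1 + d)) (crr_states S0 u d) (crr_states S0 u d)"
proof -
  have e1: "x * (1 + u) * (1 + d) = x" for x
    using assms by (metis mult.assoc mult_1_right)
  have e2: "x * (1 + d) * (1 + u) = x" for x
    using assms by (metis mult.assoc mult.commute mult_1_right)
  show "bij_betw (\<lambda>s. s * (1 + u)) (crr_states S0 u d) (crr_states S0 u d)"
    by (rule bij_betwI[where g="\<lambda>s. s * (1 + d)"]) (auto simp: shift_in e1 e2)
  show "bij_betw (\<lambda>s. s * (1 + d)) (crr_states S0 u d) (crr_states S0 u d)"
    by (rule bij_betwI[where g="\<lambda>s. s * (1 + u)"]) (auto simp: shift_in e1 e2)
qed

lemma infsum_cmult_ennreal:
  fixes h :: "'a \<Rightarrow> ennreal"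
  assumes "c < top"
  shows "infsum (\<lambda>x. c * h x) A = c * infsum h A"
proof -
  have "(h has_sum infsum h A) A" by (rule has_sum_infsum) (rule nonneg_summable_on_complete, simp)
  hence "(sum h \<longlongrightarrow> infsum h A) (finite_subsets_at_top A)" by (simp add: has_sum_def)
  hence "((\<lambda>F. c * sum h F) \<longlongrightarrow> c * infsum h A) (finite_subsets_at_top A)"
    by (rule ennreal_tendsto_cmult[OF assms])
  hence "((\<lambda>x. c * h x) has_sum c * infsum h A) A"
    by (simp add: has_sum_def sum_distrib_left)
  thus ?thesis by (rule infsumI)
qed

lemma real_case:
  assumes ab: "(1 + u) * (1 + d) = 1" and q: "0 \<le> q" "q \<le> 1"
    and sf: "(\<lambda>K. norm (f K)) summable_on crr_states S0 u d"
  shows "(\<lambda>s. norm (repl_val q u d f n s)) summable_on crr_states S0 u d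
     \<and> infsum (repl_val q u d f n) (crr_states S0 u d) = infsum f (crr_states S0 u d)"
proof (induction n)
  case 0
  then show ?case using sf by simp
next
  case (Suc n)
  let ?S = "crr_states S0 u d"
  let ?g = "repl_val q u d f n"
  have gs: "(\<lambda>s. norm (?g s)) summable_on ?S" and gi: "infsum ?g ?S = infsum f ?S"
    using Suc by auto
  have gsr: "?g summable_on ?S" by (rule abs_summable_summable[OF gs])
  have su: "(\<lambda>s. norm (?g (s * (1 + u)))) summable_on ?S"
    using gs summable_on_reindex_bij_betw[OF shift_bij(1)[OF ab], of "\<lambda>s. norm (?g s)"] by simp
  have sd: "(\<lambda>s. norm (?g (s * (1 + d)))) summable_on ?S"
    using gs summable_on_reindex_bij_betw[OF shift_bij(2)[OF ab], of "\<lambda>s. norm (?g s)"] by simp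
  have su': "(\<lambda>s. ?g (s * (1 + u))) summable_on ?S"
    by (rule abs_summable_summable[OF su])
  have sd': "(\<lambda>s. ?g (s * (1 + d))) summable_on ?S"
    by (rule abs_summable_summable[OF sd])
  have iu: "infsum (\<lambda>s. ?g (s * (1 + u))) ?S = infsum ?g ?S"
    by (rule infsum_reindex_bij_betw[OF shift_bij(1)[OF ab]])
  have id: "infsum (\<lambda>s. ?g (s * (1 + d))) ?S = infsum ?g ?S"
    by (rule infsum_reindex_bij_betw[OF shift_bij(2)[OF ab]])
  have bnd: "(\<lambda>s. q * norm (?g (s * (1 + u))) + (1 - q) * norm (?g (s * (1 + d)))) summable_on ?S"
    by (intro summable_on_add summable_on_cmult_right su sd)
  have bnd': "(\<lambda>s. norm (q * norm (?g (s * (1 + u))) + (1 - q) * norm (?g (s * (1 + d))))) summable_on ?S"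
    using bnd q by (simp add: abs_of_nonneg)
  have "(\<lambda>s. norm (repl_val q u d f (Suc n) s)) summable_on ?S"
  proof (rule summable_on_comparison_test[OF bnd])
    fix x
    show "0 \<le> norm (repl_val q u d f (Suc n) x)" by simp
    have "norm (repl_val q u d f (Suc n) x) \<le> norm (q * ?g (x * (1 + u))) + norm ((1 - q) * ?g (x * (1 + d)))"
      by (simp add: norm_triangle_ineq)
    also have "\<dots> = q * norm (?g (x * (1 + u))) + (1 - q) * norm (?g (x * (1 + d)))"
      using q by (simp add: abs_mult)
    finally show "norm (repl_val q u d f (Suc n) x) \<le> q * norm (?g (x * (1 + u))) + (1 - q) * norm (?g (x * (1 + d)))" .
  qed
  moreover have "infsum (repl_val q u d f (Suc n)) ?S = infsum f ?S"
    if rv: "repl_val q u d f (Suc n) = (\<lambda>s. q * ?g (s * (1 + u)) + (1 - q) * ?g (s * (1 + d)))"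
  proof -
    have "infsum (repl_val q u d f (Suc n)) ?S
        = infsum (\<lambda>s. q * ?g (s * (1 + u))) ?S + infsum (\<lambda>s. (1 - q) * ?g (s * (1 + d))) ?S"
      by (subst rv) (simp add: infsum_add summable_on_cmult_right su' sd')
    also have "\<dots> = q * infsum ?g ?S + (1 - q) * infsum ?g ?S"
      by (simp add: infsum_cmult_right su' sd' iu id)
    also have "\<dots> = infsum f ?S" using gi by (simp add: algebra_simps)
    finally show ?thesis .
  qed
  moreover have "repl_val q u d f (Suc n) = (\<lambda>s. q * ?g (s * (1 + u)) + (1 - q) * ?g (s * (1 + d)))"
    by (rule ext) simp
  ultimately show ?case by blast
qed

lemma ennreal_case:
  assumes ab: "(1 + u) * (1 + d) = 1" and q: "0 \<le> q" "q \<le> 1"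
    and fp: "\<forall>K\<in>crr_states S0 u d. f K \<ge> 0"
  shows "(\<forall>s\<in>crr_states S0 u d. repl_val q u d f n s \<ge> 0)
     \<and> infsum (\<lambda>s. ennreal (repl_val q u d f n s)) (crr_states S0 u d)
       = infsum (\<lambda>s. ennreal (f s)) (crr_states S0 u d)"
proof (induction n)
  case 0
  then show ?case using fp by simp
next
  case (Suc n)
  let ?S = "crr_states S0 u d"
  let ?g = "repl_val q u d f n"
  have gp: "\<forall>s\<in>?S. ?g s \<ge> 0" and gi: "infsum (\<lambda>s. ennreal (?g s)) ?S = infsum (\<lambda>s. ennreal (f s)) ?S"
    using Suc by auto
  have pos: "\<forall>s\<in>?S. repl_val q u d f (Suc n) s \<ge> 0"
    using gp q shift_in by simp
  have eq: "ennreal (repl_val q u d f (Suc n) s) =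
      ennreal q * ennreal (?g (s * (1 + u))) + ennreal (1 - q) * ennreal (?g (s * (1 + d)))"
    if "s \<in> ?S" for s
    using gp q shift_in[OF that] by (simp add: ennreal_plus ennreal_mult)
  have iu: "infsum (\<lambda>s. ennreal (?g (s * (1 + u)))) ?S = infsum (\<lambda>s. ennreal (?g s)) ?S"
    by (rule infsum_reindex_bij_betw[OF shift_bij(1)[OF ab]])
  have id: "infsum (\<lambda>s. ennreal (?g (s * (1 + d)))) ?S = infsum (\<lambda>s. ennreal (?g s)) ?S"
    by (rule infsum_reindex_bij_betw[OF shift_bij(2)[OF ab]])
  have sm: "(h :: real \<Rightarrow> ennreal) summable_on ?S" for h
    by (rule nonneg_summable_on_complete) simp
  have cm: "infsum (\<lambda>x. ennreal c * h x) ?S = ennreal c * infsum h ?S" for h :: "real \<Rightarrow> ennreal" and c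
    by (rule infsum_cmult_ennreal) simp
  have "infsum (\<lambda>s. ennreal (repl_val q u d f (Suc n) s)) ?S
      = infsum (\<lambda>s. ennreal q * ennreal (?g (s * (1 + u))) + ennreal (1 - q) * ennreal (?g (s * (1 + d)))) ?S"
    using eq by (rule infsum_cong)
  also have "\<dots> = infsum (\<lambda>s. ennreal q * ennreal (?g (s * (1 + u)))) ?S
       + infsum (\<lambda>s. ennreal (1 - q) * ennreal (?g (s * (1 + d)))) ?S"
    by (rule infsum_add[OF sm sm])
  also have "\<dots> = ennreal q * infsum (\<lambda>s. ennreal (?g s)) ?S + ennreal (1 - q) * infsum (\<lambda>s. ennreal (?g s)) ?S"
    by (simp only: cm iu id)
  also have "\<dots> = (ennreal q + ennreal (1 - q)) * infsum (\<lambda>s. ennreal (?g s)) ?S"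
    by (simp add: distrib_right)
  also have "ennreal q + ennreal (1 - q) = 1"
    using q by (simp flip: ennreal_plus)
  finally show ?case using pos gi by simp
qed

theorem proposition1:
  fixes u d r S0 q :: real and T :: nat and f :: "real \<Rightarrow> real"
  assumes "d < 0" and "0 < r" and "r < u" and "(1 + u) * (1 + d) = 1"
    and "S0 > 0" and "T \<ge> 1" and "q = (r - d) / (u - d)"
  shows "((\<lambda>K. norm (f K)) summable_on crr_states S0 u d \<longrightarrow>
           (\<forall>t\<le>T. (\<Sum>\<^sub>\<infinity>s\<in>crr_states S0 u d. V_f q u d f T s t)
                   = (\<Sum>\<^sub>\<infinity>K\<in>crr_states S0 u d. f K)))
       \<and> ((\<forall>K\<in>crr_states S0 u d. f K \<ge> 0) \<longrightarrow>
           (\<forall>t\<le>T. (\<Sum>\<^sub>\<infinity>s\<in>crr_states S0 u d. ennreal (V_f q u d f T s t))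
                   = (\<Sum>\<^sub>\<infinity>K\<in>crr_states S0 u d. ennreal (f K))))"
proof -
  have q0: "0 \<le> q" using assms by simp
  have q1: "q \<le> 1" using assms by (simp add: divide_le_eq_1)
  show ?thesis
    unfolding V_f_def
    using real_case[OF assms(4) q0 q1] ennreal_case[OF assms(4) q0 q1] by blast
qed

end
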